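(* Let $L = L_p + \varepsilon L_d \in \mathbb{DH}[t]$ be a line polynomial, let $h, \ell \in \mathbb{R}[t]$ be nonzero, and let $Q = q_0 + q_1\mathbf{i} + q_2\mathbf{j} + q_3\mathbf{k} \in \mathbb{H}[t]$ be such that $P = Qh\ell$ satisfies $P\mathbf{k}\overline{P} = hL_p$. Write $M = m_1\mathbf{i} + m_2\mathbf{j} + m_3\mathbf{k} = Q\mathbf{k}\overline{Q}$ and $k_5\mathbf{i} + k_6\mathbf{j} + k_7\mathbf{k} = K_d := L_d/\ell$, and assume $m_3 \neq 0$ and $q_3 \neq 0$. Then all solutions $D = d_0 + d_1\mathbf{i} + d_2\mathbf{j} + d_3\mathbf{k}$, with $d_0,\dots,d_3$ in the field of real rational functions $\mathbb{R}(t)$, of the equation $$-P\mathbf{k}\overline{D} - D\mathbf{k}\overline{P} = hL_d$$ are given by $$d_1 = -\frac{2d_0q_2}{2q_3} + \frac{k_5(q_2^2-q_3^2)+k_6(q_0q_3-q_1q_2)}{2q_3m_3},$$ $$d_2 = \frac{2d_0q_1}{2q_3} + \frac{k_5(-q_0q_3-q_1q_2)+k_6(q_1^2-q_3^2)}{2q_3m_3},$$ $$d_3 = -\frac{2d_0q_0}{2q_3} + \frac{k_5(q_1q_3+q_0q_2)+k_6(q_2q_3-q_0q_1)}{2q_3m_3},$$ where $d_0 \in \mathbb{R}(t)$ is arbitrary.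
   Context: $\mathbb{H}$ denotes the real quaternions with units $\mathbf{i},\mathbf{j},\mathbf{k}$ and conjugation $\overline{p_0 + p_1\mathbf{i} + p_2\mathbf{j} + p_3\mathbf{k}} = p_0 - p_1\mathbf{i} - p_2\mathbf{j} - p_3\mathbf{k}$; $\mathbb{DH} = \mathbb{H} + \varepsilon\mathbb{H}$ with $\varepsilon^2=0$, $\varepsilon$ central. $\mathbb{H}[t]$, $\mathbb{DH}[t]$ are polynomial rings in a real indeterminate $t$ commuting with the coefficients; conjugation acts coefficientwise. A line polynomial is $L = L_p + \varepsilon L_d \in \mathbb{DH}[t]$ with $L_p, L_d \in \mathbb{H}[t]$ vectorial (zero scalar part), $L_p\overline{L_d} + L_d\overline{L_p} = 0$, and $L_p \neq 0$. (In the paper, $\ell$ is the minimal saturating factor of $L_p$: the monic real polynomial of minimal degree with $L_p\ell = P'\mathbf{k}\overline{P'}$ for some $P' \in \mathbb{H}[t]$.) *)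

theory Defs
  imports "HOL-Computational_Algebra.Polynomial" "HOL-Computational_Algebra.Fraction_Field"
begin

text \<open>Quaternions with coefficients in a commutative ring 'a:
  Quat p0 p1 p2 p3 stands for p0 + p1 i + p2 j + p3 k.
  H[t] is rendered as real poly quat, and quaternions over R(t) as real poly fract quat.\<close>

datatype 'a quat = Quat (qre: 'a) (qi: 'a) (qj: 'a) (qk: 'a)

definition qmul :: "'a::comm_ring quat \<Rightarrow> 'a quat \<Rightarrow> 'a quat" where
  "qmul a b = Quat
     (qre a * qre b - qi a * qi b - qj a * qj b - qk a * qk b)
     (qre a * qi b + qi a * qre b + qj a * qk b - qk a * qj b)
     (qre a * qj b - qi a * qk b + qj a * qre b + qk a * qi b)
     (qre a * qk b + qi a * qj b - qj a * qi b + qk a * qre b)"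

definition qadd :: "'a::comm_ring quat \<Rightarrow> 'a quat \<Rightarrow> 'a quat" where
  "qadd a b = Quat (qre a + qre b) (qi a + qi b) (qj a + qj b) (qk a + qk b)"

definition qneg :: "'a::comm_ring quat \<Rightarrow> 'a quat" where
  "qneg a = Quat (- qre a) (- qi a) (- qj a) (- qk a)"

definition qcnj :: "'a::comm_ring quat \<Rightarrow> 'a quat" where
  "qcnj a = Quat (qre a) (- qi a) (- qj a) (- qk a)"

definition qscale :: "'a::comm_ring \<Rightarrow> 'a quat \<Rightarrow> 'a quat" where
  "qscale c a = Quat (c * qre a) (c * qi a) (c * qj a) (c * qk a)"

definition qzero :: "'a::comm_ring quat" where
  "qzero = Quat 0 0 0 0"

definition qunit_k :: "'a::comm_ring_1 quat" where
  "qunit_k = Quat 0 0 0 1"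

definition vectorial :: "'a::comm_ring quat \<Rightarrow> bool" where
  "vectorial a \<longleftrightarrow> qre a = 0"

definition to_fract :: "real poly \<Rightarrow> real poly fract" where
  "to_fract a = Fract a 1"

definition qfr :: "real poly quat \<Rightarrow> real poly fract quat" where
  "qfr a = Quat (to_fract (qre a)) (to_fract (qi a)) (to_fract (qj a)) (to_fract (qk a))"

text \<open>Line polynomial L = Lp + eps Ld.\<close>
definition line_poly :: "real poly quat \<Rightarrow> real poly quat \<Rightarrow> bool" where
  "line_poly Lp Ld \<longleftrightarrow> vectorial Lp \<and> vectorial Ld \<and>
     qadd (qmul Lp (qcnj Ld)) (qmul Ld (qcnj Lp)) = qzero \<and> Lp \<noteq> qzero"

end

theory Submission
  imports Defs
begin
lemma tf_mult[simp]: "to_fract (a*b) = to_fract a * to_fract b" by (simp add: to_fract_def)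
lemma tf_add[simp]: "to_fract (a+b) = to_fract a + to_fract b" by (simp add: to_fract_def)
lemma tf_diff[simp]: "to_fract (a-b) = to_fract a - to_fract b" by (simp add: to_fract_def)
lemma tf_minus[simp]: "to_fract (-a) = - to_fract a" by (simp add: to_fract_def)
lemma tf_0[simp]: "to_fract 0 = 0" by (simp add: to_fract_def Zero_fract_def)
lemma tf_1[simp]: "to_fract 1 = 1" by (simp add: to_fract_def One_fract_def)
lemma tf_eq[simp]: "to_fract a = to_fract b \<longleftrightarrow> a = b" by (simp add: to_fract_def eq_fract)
lemma tf_eq0[simp]: "to_fract a = 0 \<longleftrightarrow> a = 0" using tf_eq[of a 0] by simp
lemma tf_numeral[simp]: "to_fract (numeral n) = numeral n"
  by (metis Fract_of_nat_eq of_nat_numeral to_fract_def)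
lemma qscale_inj: "(c::'a::idom) \<noteq> 0 \<Longrightarrow> qscale c x = qscale c y \<longleftrightarrow> x = y"
  by (cases x; cases y) (simp add: qscale_def)
lemma qmul_scale: "qmul (qscale s Q) (qmul qunit_k (qcnj (qscale s Q))) = qscale (s*s) (qmul Q (qmul qunit_k (qcnj Q)))"
  for s :: "'a::comm_ring_1"
  by (cases Q) (simp add: qmul_def qscale_def qcnj_def qunit_k_def algebra_simps)

lemma aux:
  fixes a b c m d :: "'a::linordered_field"
  assumes "c \<noteq> 0" "m \<noteq> 0"
  shows "(d = a/(2*c) + b/(2*c*m)) \<longleftrightarrow> (2*c*m*d = a*m + b)"
proof -
  have e: "a/(2*c) + b/(2*c*m) = (a*m+b)/(2*c*m)" using assms by (simp add: field_simps)
  have "d = (a*m+b)/(2*c*m) \<longleftrightarrow> d*(2*c*m) = a*m+b"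
    using assms by (simp add: eq_divide_eq)
  then show ?thesis unfolding e by (simp add: mult.commute)
qed

lemma core:
  fixes q0 q1 q2 q3 d0 d1 d2 d3 k5 k6 k7 :: "'a::linordered_field"
  assumes Mdef: "Quat m0 m1 m2 m3 = qmul (Quat q0 q1 q2 q3) (qmul qunit_k (qcnj (Quat q0 q1 q2 q3)))"
  and ort: "m1*k5+m2*k6+m3*k7 = 0"
  and q3: "q3 \<noteq> 0" and m3: "m3 \<noteq> 0"
  shows "qadd (qmul (Quat q0 q1 q2 q3) (qmul qunit_k (qcnj (Quat d0 d1 d2 d3)))) (qmul (Quat d0 d1 d2 d3) (qmul qunit_k (qcnj (Quat q0 q1 q2 q3)))) = Quat 0 (-k5) (-k6) (-k7)
   \<longleftrightarrow>
    (d1 = - (2 * d0 * q2) / (2 * q3)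
          + (k5 * (q2^2 - q3^2) + k6 * (q0 * q3 - q1 * q2)) / (2 * q3 * m3) \<and>
     d2 = (2 * d0 * q1) / (2 * q3)
          + (k5 * (- q0 * q3 - q1 * q2) + k6 * (q1^2 - q3^2)) / (2 * q3 * m3) \<and>
     d3 = - (2 * d0 * q0) / (2 * q3)
          + (k5 * (q1 * q3 + q0 * q2) + k6 * (q2 * q3 - q0 * q1)) / (2 * q3 * m3))"
    (is "?E \<longleftrightarrow> ?F")
proof -
  have N: "q0^2+q1^2+q2^2+q3^2 \<noteq> 0"
  proof -
    have "q3^2 > 0" using q3 by simp
    moreover have "q0^2 \<ge> 0" "q1^2 \<ge> 0" "q2^2 \<ge> 0" by simp_all
    ultimately show ?thesis by linarith
  qed
  have c1: "d1 = - (2 * d0 * q2) / (2 * q3)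
          + (k5 * (q2^2 - q3^2) + k6 * (q0 * q3 - q1 * q2)) / (2 * q3 * m3) \<longleftrightarrow>
     2*q3*m3*d1 = (-(2*d0*q2))*m3 + k5*(q2^2-q3^2) + k6*(q0*q3-q1*q2)"
    by (simp only: aux[OF q3 m3] add.assoc)
  have c2: "d2 = (2 * d0 * q1) / (2 * q3)
          + (k5 * (- q0 * q3 - q1 * q2) + k6 * (q1^2 - q3^2)) / (2 * q3 * m3) \<longleftrightarrow>
     2*q3*m3*d2 = (2*d0*q1)*m3 + k5 * (- q0 * q3 - q1 * q2) + k6 * (q1^2 - q3^2)"
    by (simp only: aux[OF q3 m3] add.assoc)
  have c3: "d3 = - (2 * d0 * q0) / (2 * q3)
          + (k5 * (q1 * q3 + q0 * q2) + k6 * (q2 * q3 - q0 * q1)) / (2 * q3 * m3) \<longleftrightarrow>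
     2*q3*m3*d3 = (-(2*d0*q0))*m3 + k5 * (q1 * q3 + q0 * q2) + k6 * (q2 * q3 - q0 * q1)"
    by (simp only: aux[OF q3 m3] add.assoc)
  have "?E \<longleftrightarrow> (2*q3*m3*d1 = (-(2*d0*q2))*m3 + k5*(q2^2-q3^2) + k6*(q0*q3-q1*q2)) \<and>
     (2*q3*m3*d2 = (2*d0*q1)*m3 + k5 * (- q0 * q3 - q1 * q2) + k6 * (q1^2 - q3^2)) \<and>
     (2*q3*m3*d3 = (-(2*d0*q0))*m3 + k5 * (q1 * q3 + q0 * q2) + k6 * (q2 * q3 - q0 * q1))"
  proof
    assume E: ?E
    have "q0^2+q1^2+q2^2+q3^2 = 0 \<or> 2*q3*m3*d1 = (-(2*d0*q2))*m3 + k5*(q2^2-q3^2) + k6*(q0*q3-q1*q2)"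
      using Mdef E ort
      apply (simp add: qmul_def qadd_def qcnj_def qunit_k_def)
      by algebra
    moreover have "q0^2+q1^2+q2^2+q3^2 = 0 \<or> 2*q3*m3*d2 = (2*d0*q1)*m3 + k5 * (- q0 * q3 - q1 * q2) + k6 * (q1^2 - q3^2)"
      using Mdef E ort
      apply (simp add: qmul_def qadd_def qcnj_def qunit_k_def)
      by algebra
    moreover have "q0^2+q1^2+q2^2+q3^2 = 0 \<or> 2*q3*m3*d3 = (-(2*d0*q0))*m3 + k5 * (q1 * q3 + q0 * q2) + k6 * (q2 * q3 - q0 * q1)"
      using Mdef E ort
      apply (simp add: qmul_def qadd_def qcnj_def qunit_k_def)
      by algebra
    ultimately show "(2*q3*m3*d1 = (-(2*d0*q2))*m3 + k5*(q2^2-q3^2) + k6*(q0*q3-q1*q2)) \<and>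
     (2*q3*m3*d2 = (2*d0*q1)*m3 + k5 * (- q0 * q3 - q1 * q2) + k6 * (q1^2 - q3^2)) \<and>
     (2*q3*m3*d3 = (-(2*d0*q0))*m3 + k5 * (q1 * q3 + q0 * q2) + k6 * (q2 * q3 - q0 * q1))"
      using N by blast
  next
    assume F: "(2*q3*m3*d1 = (-(2*d0*q2))*m3 + k5*(q2^2-q3^2) + k6*(q0*q3-q1*q2)) \<and>
     (2*q3*m3*d2 = (2*d0*q1)*m3 + k5 * (- q0 * q3 - q1 * q2) + k6 * (q1^2 - q3^2)) \<and>
     (2*q3*m3*d3 = (-(2*d0*q0))*m3 + k5 * (q1 * q3 + q0 * q2) + k6 * (q2 * q3 - q0 * q1))"
    show ?E
      using Mdef F ort q3 m3
      apply (simp add: qmul_def qadd_def qcnj_def qunit_k_def)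
      apply (intro conjI)
      apply algebra+
      done
  qed
  then show ?thesis using c1 c2 c3 by simp
qed

theorem lemma3:
  fixes Lp Ld Q P M :: "real poly quat" and h l :: "real poly"
    and q0 q1 q2 q3 m3 k5 k6 :: "real poly fract"
    and D :: "real poly fract quat" and d0 d1 d2 d3 :: "real poly fract"
  assumes line: "line_poly Lp Ld"
    and h: "h \<noteq> 0" and l: "l \<noteq> 0"
    and P: "P = qscale (h * l) Q"
    and PkP: "qmul P (qmul qunit_k (qcnj P)) = qscale h Lp"
    and M: "M = qmul Q (qmul qunit_k (qcnj Q))"
    and q: "q0 = to_fract (qre Q)" "q1 = to_fract (qi Q)" "q2 = to_fract (qj Q)" "q3 = to_fract (qk Q)"
    and m3: "m3 = to_fract (qk M)"
    and k5: "k5 = to_fract (qi Ld) / to_fract l"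
    and k6: "k6 = to_fract (qj Ld) / to_fract l"
    and m3nz: "m3 \<noteq> 0" and q3nz: "q3 \<noteq> 0"
    and D: "D = Quat d0 d1 d2 d3"
  shows "qadd (qneg (qmul (qfr P) (qmul qunit_k (qcnj D))))
              (qneg (qmul D (qmul qunit_k (qcnj (qfr P)))))
           = qscale (to_fract h) (qfr Ld)
    \<longleftrightarrow>
    (d1 = - (2 * d0 * q2) / (2 * q3)
          + (k5 * (q2^2 - q3^2) + k6 * (q0 * q3 - q1 * q2)) / (2 * q3 * m3) \<and>
     d2 = (2 * d0 * q1) / (2 * q3)
          + (k5 * (- q0 * q3 - q1 * q2) + k6 * (q1^2 - q3^2)) / (2 * q3 * m3) \<and>
     d3 = - (2 * d0 * q0) / (2 * q3)
          + (k5 * (q1 * q3 + q0 * q2) + k6 * (q2 * q3 - q0 * q1)) / (2 * q3 * m3))"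
proof -
  obtain a0 a1 a2 a3 where Qc: "Q = Quat a0 a1 a2 a3" by (cases Q)
  obtain p0 p1 p2 p3 where Lpc: "Lp = Quat p0 p1 p2 p3" by (cases Lp)
  obtain e0 e1 e2 e3 where Ldc: "Ld = Quat e0 e1 e2 e3" by (cases Ld)
  obtain n0 n1 n2 n3 where Mc: "M = Quat n0 n1 n2 n3" by (cases M)
  define s where "s = h * l"
  have s0: "s \<noteq> 0" using h l by (simp add: s_def)
  have "qscale (s*s) M = qscale h Lp" using PkP unfolding P M s_def[symmetric] qmul_scale .
  then have pn: "s*s*n1 = h*p1" "s*s*n2 = h*p2" "s*s*n3 = h*p3"
    by (simp_all add: Mc Lpc qscale_def)
  have p0: "p0 = 0" and e0: "e0 = 0" and re: "qadd (qmul Lp (qcnj Ld)) (qmul Ld (qcnj Lp)) = qzero"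
    using line unfolding line_poly_def vectorial_def Lpc Ldc by auto
  have "2*(p1*e1+p2*e2+p3*e3) = 0"
    using arg_cong[OF re, of qre] unfolding p0 e0 Lpc Ldc by (simp add: Lpc Ldc qmul_def qcnj_def qadd_def qzero_def algebra_simps)
  then have pe: "p1*e1+p2*e2+p3*e3 = 0" by simp
  have "s*s*(n1*e1+n2*e2+n3*e3) = h*(p1*e1+p2*e2+p3*e3)"
    using pn by (simp add: algebra_simps)
  then have ne: "n1*e1+n2*e2+n3*e3 = 0" using pe s0 by simp
  define Lf where "Lf = to_fract l"
  define H where "H = to_fract h"
  have Lf0: "Lf \<noteq> 0" and H0: "H \<noteq> 0" using h l by (simp_all add: Lf_def H_def)
  define k7 where "k7 = to_fract e3 / Lf"
  have ort: "to_fract n1*k5+to_fract n2*k6+m3*k7 = 0"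
  proof -
    have "m3 = to_fract n3" by (simp add: m3 Mc)
    have "to_fract n1*k5+to_fract n2*k6+m3*k7 = to_fract (n1*e1+n2*e2+n3*e3) / Lf"
      using \<open>m3 = to_fract n3\<close> by (simp add: k5 k6 k7_def Ldc Lf_def add_divide_distrib)
    then show ?thesis using ne by simp
  qed
  have Mdef: "Quat (to_fract n0) (to_fract n1) (to_fract n2) m3 = qmul (Quat q0 q1 q2 q3) (qmul qunit_k (qcnj (Quat q0 q1 q2 q3)))"
    using M unfolding Mc m3 q Qc by (simp add: qmul_def qcnj_def qunit_k_def)
  define E where "E = qadd (qmul (Quat q0 q1 q2 q3) (qmul qunit_k (qcnj (Quat d0 d1 d2 d3)))) (qmul (Quat d0 d1 d2 d3) (qmul qunit_k (qcnj (Quat q0 q1 q2 q3))))"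
  have qfrP: "qfr P = Quat (H*Lf*q0) (H*Lf*q1) (H*Lf*q2) (H*Lf*q3)"
    unfolding P qfr_def qscale_def q Qc H_def Lf_def by simp
  have Lq: "qadd (qneg (qmul (qfr P) (qmul qunit_k (qcnj D))))
              (qneg (qmul D (qmul qunit_k (qcnj (qfr P))))) = qscale (-(H*Lf)) E"
    unfolding qfrP E_def D by (simp add: qmul_def qadd_def qneg_def qcnj_def qunit_k_def qscale_def algebra_simps)
  have Rq: "qscale (to_fract h) (qfr Ld) = qscale (-(H*Lf)) (Quat 0 (-k5) (-k6) (-k7))"
    unfolding qfr_def Ldc e0 qscale_def k5 k6 k7_def H_def[symmetric] Lf_def[symmetric] using Lf0 by simp
  have HL: "-(H*Lf) \<noteq> 0" using H0 Lf0 by simp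
  show ?thesis unfolding Lq Rq qscale_inj[OF HL] E_def
    by (rule core[OF Mdef ort q3nz m3nz])
qed
end
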